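(* Let $1\le d\le n$ be integers with $\gcd(n,d)=1$ and $d^2\equiv 1\pmod n$. Let $n=n'm$ with $n',m$ positive integers and $m$ odd, and let $1\le d'\le n'$ with $d'\equiv d\pmod{n'}$. Then $(n,d)$ is a critical pair if and only if $(n',d')$ is a critical pair.
   Context: A pair of positive integers $(n,d)$ with $d<n$ and $\gcd(n,d)=1$ is a critical pair if the Hirzebruch–Jung expansion $(a_0,\dots,a_r)$ of $n/d$ (defined by $\frac nd=a_0-1/(a_1-1/(\cdots-1/a_r))$, $a_i\ge2$) is symmetric ($a_i=a_{r-i}$ for all $i$), of odd length ($r$ even), and has even central term $a_{r/2}$. A pair $(n,d)$ with $d=n$ (i.e. $(1,1)$) is not critical. *)

theory Defs
  imports "HOL-Number_Theory.Number_Theory"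
begin

text \<open>Hirzebruch-Jung (negative) continued fraction expansion of n/d:
  n/d = a0 - 1/(a1 - 1/( ... - 1/ar)).  At each step a = ceiling(n/d) and the
  remainder a/1 - n/d = r/d with r = a*d - n, so we continue with d/r.\<close>

function hj :: "nat \<Rightarrow> nat \<Rightarrow> nat list" where
  "hj n d = (if d = 0 then []
             else if d dvd n then [n div d]
             else (n div d + 1) # hj d ((n div d + 1) * d - n))"
  by pat_completeness auto
termination
proof (relation "measure snd")
  fix n d :: nat
  assume d: "d \<noteq> 0" and nd: "\<not> d dvd n"
  have s: "n mod d > 0" using nd by (simp add: dvd_eq_mod_eq_0)
  have e: "n div d * d + n mod d = n" by simp
  have "(n div d + 1) * d - n = d - n mod d"
  proof -
    have "(n div d + 1) * d = n div d * d + d" by simp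
    thus ?thesis using e by linarith
  qed
  thus "((d, (n div d + 1) * d - n), (n, d)) \<in> measure snd" using s d by simp
qed auto

definition critical_pair :: "nat \<Rightarrow> nat \<Rightarrow> bool" where
  "critical_pair n d \<longleftrightarrow>
     0 < d \<and> d < n \<and> coprime n d \<and>
     (let as = hj n d in
        rev as = as \<and> odd (length as) \<and> even (as ! (length as div 2)))"

end

theory Submission
  imports Defs
begin


declare hj.simps [simp del]

definition mm :: "int\<times>int\<times>int\<times>int \<Rightarrow> int\<times>int\<times>int\<times>int \<Rightarrow> int\<times>int\<times>int\<times>int" where
  "mm X Y = (case X of (a,b,c,d) \<Rightarrow> case Y of (e,f,g,h) \<Rightarrow>
     (a*e+b*g, a*f+b*h, c*e+d*g, c*f+d*h))"

fun mat :: "nat list \<Rightarrow> int\<times>int\<times>int\<times>int" where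
  "mat [] = (1,0,0,1)"
| "mat (a#as) = mm (int a, -1, 1, 0) (mat as)"

lemma mm_assoc: "mm (mm X Y) Z = mm X (mm Y Z)"
  by (cases X; cases Y; cases Z) (simp add: mm_def algebra_simps)

lemma mm_id: "mm (1,0,0,1) X = X" "mm X (1,0,0,1) = X"
  by (cases X; simp add: mm_def)+

lemma mat_append: "mat (xs @ ys) = mm (mat xs) (mat ys)"
  by (induction xs) (simp_all add: mm_id mm_assoc)

lemma mat_rev: "mat (rev xs) = (case mat xs of (p,q,r,s) \<Rightarrow> (p,-r,-q,s))"
proof (induction xs)
  case Nil then show ?case by simp
next
  case (Cons a xs)
  obtain p q r s where M: "mat xs = (p,q,r,s)" by (cases "mat xs") auto
  show ?case using Cons M by (simp add: mat_append mm_def algebra_simps)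
qed

lemma mat_det: "mat xs = (p,q,r,s) \<Longrightarrow> p*s - q*r = 1"
proof (induction xs arbitrary: p q r s)
  case Nil then show ?case by simp
next
  case (Cons a xs)
  obtain p' q' r' s' where M: "mat xs = (p',q',r',s')" by (cases "mat xs") auto
  with Cons.IH have det: "p'*s' - q'*r' = 1" by blast
  have e: "p = int a * p' - r'" "q = int a * q' - s'" "r = p'" "s = q'"
    using Cons.prems M by (auto simp: mm_def)
  show ?case unfolding e using det by (simp add: algebra_simps)
qed

lemma mat_pos: "xs \<noteq> [] \<Longrightarrow> \<forall>a\<in>set xs. a \<ge> 2 \<Longrightarrow> mat xs = (p,q,r,s) \<Longrightarrow> p > r \<and> r \<ge> 1"
proof (induction xs arbitrary: p q r s)
  case Nil then show ?case by simp
next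
  case (Cons a xs)
  show ?case
  proof (cases "xs = []")
    case True then show ?thesis using Cons.prems by (auto simp: mm_def)
  next
    case False
    obtain p' q' r' s' where M: "mat xs = (p',q',r',s')" by (cases "mat xs") auto
    with Cons.IH False Cons.prems have h: "p' > r'" "r' \<ge> 1" by auto
    have a: "int a \<ge> 2" using Cons.prems by auto
    have am: "int a * p' \<ge> 2 * p'" using a h by (intro mult_right_mono) auto
    have e: "p = int a * p' - r'" "r = p'" using Cons.prems M by (auto simp: mm_def)
    show ?thesis unfolding e using am h by linarith
  qed
qed

lemma hj_mat:
  assumes "0 < d" "d < n" "coprime n d"
  shows "hj n d \<noteq> [] \<and> (\<forall>a\<in>set (hj n d). a \<ge> 2) \<and>
         (\<exists>q s. mat (hj n d) = (int n, q, int d, s))"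
  using assms
proof (induction n d rule: hj.induct)
  case (1 n d)
  show ?case
  proof (cases "d dvd n")
    case True
    then have "d = 1" using 1(4) by auto
    moreover have "hj n 1 = [n]" by (subst hj.simps) simp
    ultimately show ?thesis using 1 by (simp add: mm_def)
  next
    case False
    define a where "a = n div d + 1"
    define d2 where "d2 = a * d - n"
    have e: "n div d * d + n mod d = n" by simp
    have m: "n mod d > 0" using False by (simp add: dvd_eq_mod_eq_0)
    have md: "n mod d < d" using 1(2) by simp
    have e2: "d * (n div d) + n mod d = n" by (rule mult_div_mod_eq)
    have ade: "a*d = d*(n div d) + d" by (simp add: a_def algebra_simps)
    have d2e: "d2 = d - n mod d" unfolding d2_def using e2 ade by linarith
    have d2p: "0 < d2" "d2 < d" using d2e m md by auto
    have ad: "a * d \<ge> n" using e2 ade md by linarith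
    have d2i: "int d2 = int a * int d - int n" using ad unfolding d2_def by (simp add: of_nat_diff)
    have cop: "coprime d d2"
    proof -
      have "coprime (int d) (int a * int d - int n)"
        using 1(4) by (smt (verit, best) coprimeI coprime_common_divisor coprime_int_iff
    dvd_diff dvd_trans dvd_triv_right)
      then show ?thesis using d2i by (metis coprime_int_iff)
    qed
    have hjeq: "hj n d = a # hj d d2" using False 1(2) unfolding a_def d2_def by (subst hj.simps) simp
    have IH: "hj d d2 \<noteq> [] \<and> (\<forall>a\<in>set (hj d d2). a \<ge> 2) \<and> (\<exists>q s. mat (hj d d2) = (int d, q, int d2, s))"
      using 1(1)[of] 1(2) False d2p cop unfolding a_def d2_def by auto
    then obtain q s where M: "mat (hj d d2) = (int d, q, int d2, s)" by blast
    have a2: "a \<ge> 2" unfolding a_def using 1(3) 1(2) by (simp add: Suc_le_eq div_greater_zero_iff)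
    show ?thesis using IH M hjeq a2 d2i by (auto simp: mm_def)
  qed
qed


lemma hj_unique:
  "xs \<noteq> [] \<Longrightarrow> \<forall>a\<in>set xs. a \<ge> 2 \<Longrightarrow> mat xs = (int n, q, int d, s) \<Longrightarrow> hj n d = xs"
proof (induction xs arbitrary: n d q s)
  case Nil then show ?case by simp
next
  case (Cons a ys)
  show ?case
  proof (cases "ys = []")
    case True
    then have "n = a" "d = 1" using Cons.prems by (auto simp: mm_def)
    then show ?thesis using True by (subst hj.simps) simp
  next
    case False
    obtain p q' r s' where M: "mat ys = (p,q',r,s')" by (cases "mat ys") auto
    have pr: "p > r" "r \<ge> 1" using mat_pos[OF False _ M] Cons.prems by auto
    define P where "P = nat p"
    define R where "R = nat r"
    have PR: "p = int P" "r = int R" using pr unfolding P_def R_def by auto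
    have IH: "hj P R = ys" using Cons.IH[OF False _ ] Cons.prems M PR by auto
    have e: "int n = int a * p - r" "int d = p" using Cons.prems M by (auto simp: mm_def)
    have a2: "a \<ge> 2" using Cons.prems by auto
    have dP: "d = P" using e PR by simp
    have RP: "R < P" "0 < R" using pr PR by auto
    have neq: "n = (a - 1) * P + (P - R)"
    proof -
      have "int n = int a * int P - int R" using e PR by simp
      moreover have "int ((a - 1) * P + (P - R)) = (int a - 1) * int P + (int P - int R)"
        using a2 RP by (simp add: of_nat_diff)
      moreover have "(int a - 1) * int P + (int P - int R) = int a * int P - int R"
        by (simp add: algebra_simps)
      ultimately show ?thesis by linarith
    qed
    have ndiv: "n div P = a - 1" using neq RP
      by (metis Euclidean_Rings.div_eq_0_iff add.commute diff_less
    div_mult_self1 less_add_same_cancel1 linorder_neqE_nat not_add_less1 not_gr0)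
    have nmod: "n mod P = P - R" using neq RP
      by (metis diff_less mod_if mod_mult_self3 not_gr0 not_less0)
    have ndvd: "\<not> P dvd n" using nmod RP by (simp add: dvd_eq_mod_eq_0)
    have R2: "(n div P + 1) * P - n = R"
    proof -
      have "(n div P + 1) * P = a * P" using ndiv a2 by simp
      moreover have "int (a * P) - int n = int R" using e PR by simp
      ultimately show ?thesis by linarith
    qed
    have "hj n d = (n div P + 1) # hj P ((n div P + 1) * P - n)"
      using dP ndvd RP by (subst hj.simps) simp
    then show ?thesis using R2 ndiv IH a2 by simp
  qed
qed



lemma pal:
  assumes "0 < d" "d < n" "coprime n d" "[d^2 = 1] (mod n)"
  shows "rev (hj n d) = hj n d"
proof -
  obtain q s where M: "mat (hj n d) = (int n, q, int d, s)" and ne: "hj n d \<noteq> []"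
    and ge: "\<forall>a\<in>set (hj n d). a \<ge> 2"
    using hj_mat[OF assms(1-3)] by blast
  have det: "int n * s - q * int d = 1" using mat_det[OF M] .
  have MR: "mat (rev (hj n d)) = (int n, - int d, - q, s)" using M by (simp add: mat_rev)
  have pos: "int n > - q" "- q \<ge> 1" using mat_pos[OF _ _ MR] ne ge by auto
  define e where "e = nat (- q)"
  have eq: "int e = - q" using pos e_def by simp
  have U: "hj n e = rev (hj n d)" using hj_unique[of "rev (hj n d)" n _ e] MR ne ge eq by simp
  have "[int (d^2) = int 1] (mod int n)" using assms(4) by (simp only: cong_int_iff)
  then have "[int d ^ 2 = 1] (mod int n)" by simp
  then have d1: "int n dvd int d ^ 2 - 1" by (simp add: cong_iff_dvd_diff)
  have qe: "q = - int e" using eq by simp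
  have "int e * int d - 1 - int n * (- s) = (int n * s - q * int d) - 1" unfolding qe by (simp add: algebra_simps)
  then have "int e * int d - 1 = int n * (- s)" using det by simp
  then have d2: "int n dvd int e * int d - 1" by simp
  have "int e - int d = int e * (1 - int d ^ 2) + int d * (int e * int d - 1)"
    by (simp add: algebra_simps power2_eq_square)
  moreover have "int n dvd int e * (1 - int d ^ 2) + int d * (int e * int d - 1)"
  proof (rule dvd_add)
    have "int n dvd - (int d ^ 2 - 1)" using d1 by (simp only: dvd_minus_iff)
    then have "int n dvd 1 - int d ^ 2" by simp
    then show "int n dvd int e * (1 - int d ^ 2)" by (rule dvd_mult)
    show "int n dvd int d * (int e * int d - 1)" using d2 by (rule dvd_mult)
  qed
  ultimately have nd: "int n dvd int e - int d" by simp
  have "int e - int d = 0"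
  proof (rule ccontr)
    assume "int e - int d \<noteq> 0"
    then have "\<bar>int n\<bar> \<le> \<bar>int e - int d\<bar>" using dvd_imp_le_int nd by blast
    then show False using pos eq assms(1,2) by linarith
  qed
  then have "e = d" by simp
  then show ?thesis using U by simp
qed

lemma pal_odd: "rev xs = xs \<Longrightarrow> odd (length xs) \<Longrightarrow>
  xs = take (length xs div 2) xs @ [xs ! (length xs div 2)] @ rev (take (length xs div 2) xs)"
proof -
  assume r: "rev xs = xs" and o: "odd (length xs)"
  let ?h = "length xs div 2"
  have hl: "?h < length xs" using o by (cases "length xs") auto
  have "rev (take ?h xs) = drop (length xs - ?h) (rev xs)" by (simp add: rev_take)
  also have "length xs - ?h = Suc ?h" using o by presburger
  finally have "rev (take ?h xs) = drop (Suc ?h) xs" using r by simp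
  moreover have "drop ?h xs = xs ! ?h # drop (Suc ?h) xs" using hl by (simp add: Cons_nth_drop_Suc)
  ultimately show ?thesis by (metis append_Cons append_Nil append_take_drop_id)
qed

lemma pal_even: "rev xs = xs \<Longrightarrow> even (length xs) \<Longrightarrow>
  xs = take (length xs div 2) xs @ rev (take (length xs div 2) xs)"
proof -
  assume r: "rev xs = xs" and o: "even (length xs)"
  let ?h = "length xs div 2"
  have "rev (take ?h xs) = drop (length xs - ?h) (rev xs)" by (simp add: rev_take)
  also have "length xs - ?h = ?h" using o by presburger
  finally have "rev (take ?h xs) = drop ?h xs" using r by simp
  then show ?thesis by simp
qed

definition Q :: "int \<Rightarrow> int \<Rightarrow> bool" where
  "Q n d \<longleftrightarrow> (\<exists>j::nat. j \<ge> 1 \<and> (2::int)^j dvd n \<and> \<not> (2::int)^(Suc j) dvd n \<and>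
      ((2::int)^j dvd d - 1 \<or> (2::int)^j dvd d + 1))"

lemma exj: "(n::int) \<noteq> 0 \<Longrightarrow> \<exists>j. (2::int)^j dvd n \<and> \<not> (2::int)^(Suc j) dvd n"
proof (induction "nat \<bar>n\<bar>" arbitrary: n rule: less_induct)
  case less
  show ?case
  proof (cases "even n")
    case False then show ?thesis by (intro exI[of _ 0]) simp
  next
    case True then obtain m where m: "n = 2*m" by blast
    have m0: "m \<noteq> 0" using less.prems m by simp
    have "nat \<bar>m\<bar> < nat \<bar>n\<bar>" using m m0 by (simp add: abs_mult)
    from less.hyps[OF this m0] obtain j where "(2::int)^j dvd m" "\<not> (2::int)^(Suc j) dvd m" by blast
    moreover have "(2::int)^Suc (Suc j) dvd 2*m \<longleftrightarrow> 2^Suc j dvd m"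
      by (simp only: power_Suc[of 2 "Suc j"] dvd_mult_cancel_left) simp
    moreover have "(2::int)^Suc j dvd 2*m \<longleftrightarrow> 2^j dvd m"
      by (simp only: power_Suc[of 2 j] dvd_mult_cancel_left) simp
    ultimately show ?thesis using m by (intro exI[of _ "Suc j"]) simp
  qed
qed

lemma oddc: "odd (z::int) \<Longrightarrow> (2::int)^j dvd z*w \<Longrightarrow> (2::int)^j dvd w"
proof -
  assume o: "odd z" and dv: "(2::int)^j dvd z*w"
  have "coprime ((2::int)^j) z" using o by simp
  then show ?thesis using dv by (simp add: coprime_dvd_mult_right_iff)
qed

lemma L1:
  fixes p t r u c n d :: int
  assumes det: "p*u - t*r = 1" and c: "even c" and n: "n = p*(p*c+2*t)"
    and d: "d = r*c*p + u*p + r*t" and n0: "n \<noteq> 0"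
  shows "Q n d"
proof -
  obtain j where j: "(2::int)^j dvd n" "\<not> (2::int)^(Suc j) dvd n" using exj[OF n0] by blast
  obtain c' where c': "c = 2*c'" using c by blast
  have dm: "d - 1 = r*(p*c+2*t)"
  proof -
    have "(d - 1) - (r*(p*c+2*t)) = (p*u - t*r) - 1" unfolding d by (simp add: algebra_simps)
    then show ?thesis using det by simp
  qed
  have dp: "d + 1 = p*(r*c+2*u)"
  proof -
    have "(d + 1) - (p*(r*c+2*u)) = 1 - (p*u - t*r)" unfolding d by (simp add: algebra_simps)
    then show ?thesis using det by simp
  qed
  have ne: "even n" using n c' by simp
  have j1: "j \<ge> 1"
  proof (rule ccontr)
    assume "\<not> j \<ge> 1" then have "j = 0" by simp
    then show False using j(2) ne by simp
  qed
  show ?thesis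
  proof (cases "even p")
    case False
    have "(2::int)^j dvd p*(p*c+2*t)" using j(1) n by simp
    then have "(2::int)^j dvd (p*c+2*t)" by (rule oddc[OF False])
    then have "(2::int)^j dvd d - 1" using dm by simp
    then show ?thesis unfolding Q_def using j j1 by blast
  next
    case True
    have todd: "odd t"
    proof
      assume "even t"
      then have "even (p*u - t*r)" using True by simp
      then show False using det by simp
    qed
    have B: "p*c+2*t = 2*(p*c'+t)" using c' by (simp add: algebra_simps)
    have Bo: "odd (p*c'+t)" using True todd by simp
    have "(p*c'+t)*(2*p) = n" unfolding n c' by (simp add: algebra_simps)
    then have "(2::int)^j dvd (p*c'+t)*(2*p)" using j(1) by simp
    then have "(2::int)^j dvd 2*p" by (rule oddc[OF Bo])
    moreover have "d + 1 = (2*p)*(r*c'+u)" using dp c' by (simp add: algebra_simps)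
    ultimately have "(2::int)^j dvd d + 1" by simp
    then show ?thesis unfolding Q_def using j j1 by blast
  qed
qed

lemma L2:
  fixes p t r u c n d :: int
  assumes det: "p*u - t*r = 1" and c: "odd c" and n: "n = p*(p*c+2*t)"
    and d: "d = r*c*p + u*p + r*t"
  shows "\<not> Q n d"
proof
  assume "Q n d"
  then obtain j where j1: "j \<ge> 1" and j: "(2::int)^j dvd n" "\<not> (2::int)^(Suc j) dvd n"
    and jd: "(2::int)^j dvd d - 1 \<or> (2::int)^j dvd d + 1" unfolding Q_def by blast
  have dm: "d - 1 = r*(p*c+2*t)"
  proof -
    have "(d - 1) - (r*(p*c+2*t)) = (p*u - t*r) - 1" unfolding d by (simp add: algebra_simps)
    then show ?thesis using det by simp
  qed
  have dp: "d + 1 = p*(r*c+2*u)"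
  proof -
    have "(d + 1) - (p*(r*c+2*u)) = 1 - (p*u - t*r)" unfolding d by (simp add: algebra_simps)
    then show ?thesis using det by simp
  qed
  have "(2::int) dvd 2^j" using j1 by (simp add: dvd_power)
  then have ne: "even n" using j(1) by (rule dvd_trans)
  have pe: "even p"
  proof (rule ccontr)
    assume "odd p"
    then have "odd (p*(p*c+2*t))" using c by simp
    then show False using ne n by simp
  qed
  have todd: "odd t" and rodd: "odd r"
  proof -
    have "odd (t*r)"
    proof
      assume "even (t*r)"
      then have "even (p*u - t*r)" using pe by simp
      then show False using det by simp
    qed
    then show "odd t" "odd r" by auto
  qed
  have Be: "even (p*c+2*t)" using pe by simp
  from jd show False
  proof
    assume "(2::int)^j dvd d - 1"
    then have "(2::int)^j dvd r*(p*c+2*t)" using dm by simp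
    then have "(2::int)^j dvd p*c+2*t" by (rule oddc[OF rodd])
    then have "2 * 2^j dvd p * (p*c+2*t)" using pe by (simp add: mult_dvd_mono)
    then show False using j(2) n by simp
  next
    assume "(2::int)^j dvd d + 1"
    have o: "odd (r*c+2*u)" using rodd c by simp
    have "(2::int)^j dvd (r*c+2*u)*p" using \<open>(2::int)^j dvd d + 1\<close> dp by (simp add: mult.commute)
    then have "(2::int)^j dvd p" by (rule oddc[OF o])
    then have "2^j * 2 dvd p * (p*c+2*t)" using Be by (simp add: mult_dvd_mono)
    then show False using j(2) n by (simp add: mult.commute)
  qed
qed

lemma L3:
  fixes p t r u n d :: int
  assumes det: "p*u - t*r = 1" and n: "n = p*p - t*t"
    and d: "d = r*p - u*t"
  shows "\<not> Q n d"
proof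
  assume "Q n d"
  then obtain j where j1: "j \<ge> 1" and j: "(2::int)^j dvd n" "\<not> (2::int)^(Suc j) dvd n"
    and jd: "(2::int)^j dvd d - 1 \<or> (2::int)^j dvd d + 1" unfolding Q_def by blast
  have dm: "d - 1 = (p+t)*(r-u)"
  proof -
    have "(d - 1) - ((p+t)*(r-u)) = (p*u - t*r) - 1" unfolding d by (simp add: algebra_simps)
    then show ?thesis using det by simp
  qed
  have dp: "d + 1 = (p-t)*(r+u)"
  proof -
    have "(d + 1) - ((p-t)*(r+u)) = 1 - (p*u - t*r)" unfolding d by (simp add: algebra_simps)
    then show ?thesis using det by simp
  qed
  have nf: "n = (p-t)*(p+t)" using n by (simp add: algebra_simps)
  have "(2::int) dvd 2^j" using j1 by (simp add: dvd_power)
  then have ne: "even n" using j(1) by (rule dvd_trans)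
  have X: "even (p-t)" and Y: "even (p+t)"
  proof -
    have "even (p-t) \<or> even (p+t)" using ne nf by simp
    moreover have "even (p-t) \<longleftrightarrow> even (p+t)" by simp
    ultimately show "even (p-t)" "even (p+t)" by auto
  qed
  have po: "odd p" and to: "odd t"
  proof -
    have "even p \<longleftrightarrow> even t" using X by simp
    moreover have "\<not> (even p \<and> even t)"
    proof
      assume "even p \<and> even t"
      then have "even (p*u - t*r)" by simp
      then show False using det by simp
    qed
    ultimately show "odd p" "odd t" by auto
  qed
  have ro: "odd (r-u)"
  proof
    assume e: "even (r-u)"
    then have "even r \<longleftrightarrow> even u" by simp
    then have "even (p*u - t*r)" using po to by (cases "even r") auto
    then show False using det by simp
  qed
  have ro2: "odd (r+u)" using ro by simp
  from jd show False
  proof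
    assume "(2::int)^j dvd d - 1"
    then have "(2::int)^j dvd (r-u)*(p+t)" using dm by (simp add: mult.commute)
    then have "(2::int)^j dvd p+t" by (rule oddc[OF ro])
    then have "2 * 2^j dvd (p-t)*(p+t)" using X by (simp add: mult_dvd_mono)
    then show False using j(2) nf by simp
  next
    assume "(2::int)^j dvd d + 1"
    then have "(2::int)^j dvd (r+u)*(p-t)" using dp by (simp add: mult.commute)
    then have "(2::int)^j dvd p-t" by (rule oddc[OF ro2])
    then have "2^j * 2 dvd (p-t)*(p+t)" using Y by (simp add: mult_dvd_mono)
    then show False using j(2) nf by (simp add: mult.commute)
  qed
qed



lemma shift: fixes k x y a :: int assumes "k dvd x - y" shows "k dvd x + a \<longleftrightarrow> k dvd y + a"
proof -
  have e: "(y + a) + (x - y) = x + a" by simp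
  have H: "k dvd (y + a) + (x - y) \<longleftrightarrow> k dvd y + a" by (rule dvd_add_left_iff[OF assms])
  show ?thesis using H unfolding e .
qed

lemma char:
  fixes n d :: nat
  assumes "1 \<le> d" "d \<le> n" "coprime n d" "[d^2 = 1] (mod n)"
  shows "critical_pair n d \<longleftrightarrow> Q (int n) (int d)"
proof (cases "d = n")
  case True
  then have n1: "n = 1" using assms(3) by simp
  have nq: "\<not> Q 1 1"
  proof
    assume "Q 1 1"
    then obtain j where j1: "j \<ge> 1" and j: "(2::int)^j dvd 1" unfolding Q_def by blast
    have "(2::int) dvd 2^j" using j1 by (simp add: dvd_power)
    then have "(2::int) dvd 1" using j by (rule dvd_trans)
    then show False by simp
  qed
  show ?thesis using True n1 nq unfolding critical_pair_def by simp
next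
  case False
  then have dn: "d < n" using assms(2) by simp
  have d0: "0 < d" using assms(1) by simp
  have r: "rev (hj n d) = hj n d" by (rule pal[OF d0 dn assms(3,4)])
  obtain q s where M: "mat (hj n d) = (int n, q, int d, s)"
    using hj_mat[OF d0 dn assms(3)] by blast
  have cp: "critical_pair n d \<longleftrightarrow> odd (length (hj n d)) \<and> even (hj n d ! (length (hj n d) div 2))"
    unfolding critical_pair_def Let_def using r d0 dn assms(3) by simp
  define h where "h = length (hj n d) div 2"
  define w where "w = take h (hj n d)"
  obtain p t r' u where W: "mat w = (p,t,r',u)" by (cases "mat w") auto
  have det: "p*u - t*r' = 1" using mat_det[OF W] .
  have WR: "mat (rev w) = (p, -r', -t, u)" using W by (simp add: mat_rev)
  show ?thesis
  proof (cases "odd (length (hj n d))")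
    case True
    define c where "c = hj n d ! h"
    have dec: "hj n d = w @ [c] @ rev w" using pal_odd[OF r True] unfolding w_def c_def h_def .
    have "mat (hj n d) = mat (w @ [c] @ rev w)" using dec by simp
    also have "\<dots> = mm (mat w) (mm (int c, -1, 1, 0) (mat (rev w)))"
      by (simp add: mat_append mm_id)
    finally have "mat (hj n d) = mm (p,t,r',u) (mm (int c, -1, 1, 0) (p, -r', -t, u))"
      using W WR by simp
    then have eqs: "int n = p*(p*(int c)+2*t)" "int d = r'*(int c)*p + u*p + r'*t"
      using M by (auto simp: mm_def algebra_simps)
    have "critical_pair n d \<longleftrightarrow> even c" using cp True unfolding c_def h_def by simp
    moreover have "even c \<Longrightarrow> Q (int n) (int d)"
      by (rule L1[OF det _ eqs]) (use dn in auto)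
    moreover have "odd c \<Longrightarrow> \<not> Q (int n) (int d)"
      by (rule L2[OF det _ eqs]) auto
    ultimately show ?thesis by blast
  next
    case False
    have dec: "hj n d = w @ rev w" using pal_even[OF r] False unfolding w_def h_def by simp
    have "mat (hj n d) = mat (w @ rev w)" using dec by simp
    also have "\<dots> = mm (mat w) (mat (rev w))" by (simp add: mat_append)
    finally have "mat (hj n d) = mm (p,t,r',u) (p, -r', -t, u)" using W WR by simp
    then have eqs: "int n = p*p - t*t" "int d = r'*p - u*t"
      using M by (auto simp: mm_def algebra_simps)
    have "\<not> Q (int n) (int d)" by (rule L3[OF det eqs])
    then show ?thesis using cp False by simp
  qed
qed

theorem corollary1p7:
  fixes n d n' m d' :: nat
  assumes "1 \<le> d" and "d \<le> n" and "coprime n d"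
    and "[d ^ 2 = 1] (mod n)"
    and "n = n' * m" and "0 < n'" and "0 < m" and "odd m"
    and "1 \<le> d'" and "d' \<le> n'" and "[d' = d] (mod n')"
  shows "critical_pair n d \<longleftrightarrow> critical_pair n' d'"
proof -
  have ndvd: "n' dvd n" using assms(5) by simp
  have "coprime n' d" using assms(3,5) by simp
  moreover have "gcd d' n' = gcd d n'" by (rule cong_gcd_eq[OF assms(11)])
  ultimately have cop': "coprime n' d'"
    by (metis coprime_iff_gcd_eq_1 gcd.commute)
  have "[d'^2 = d^2] (mod n')" by (rule cong_pow[OF assms(11)])
  moreover have "[d^2 = 1] (mod n')" by (rule cong_dvd_modulus_nat[OF assms(4) ndvd])
  ultimately have sq': "[d'^2 = 1] (mod n')" by (rule cong_trans)
  have c1: "critical_pair n d \<longleftrightarrow> Q (int n) (int d)" by (rule char[OF assms(1-4)])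
  have c2: "critical_pair n' d' \<longleftrightarrow> Q (int n') (int d')" by (rule char[OF assms(9,10) cop' sq'])
  have mo: "odd (int m)" using assms(8) by simp
  have A: "(2::int)^j dvd int n \<longleftrightarrow> 2^j dvd int n'" for j
  proof
    assume "(2::int)^j dvd int n"
    then have "(2::int)^j dvd int m * int n'" using assms(5) by (simp add: mult.commute)
    then show "(2::int)^j dvd int n'" by (rule oddc[OF mo])
  next
    assume "(2::int)^j dvd int n'"
    then show "(2::int)^j dvd int n" using assms(5) by simp
  qed
  have dd: "int n' dvd int d' - int d"
    using assms(11) by (metis cong_iff_dvd_diff cong_int_iff)
  have B: "((2::int)^j dvd int d - 1 \<longleftrightarrow> 2^j dvd int d' - 1) \<and>
           ((2::int)^j dvd int d + 1 \<longleftrightarrow> 2^j dvd int d' + 1)" if "(2::int)^j dvd int n'" for j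
  proof -
    have k: "(2::int)^j dvd int d' - int d" using that dd by (rule dvd_trans)
    show ?thesis using shift[OF k, of "-1"] shift[OF k, of 1] by simp
  qed
  have QQ: "Q (int n) (int d) \<longleftrightarrow> Q (int n') (int d')"
  proof
    assume "Q (int n) (int d)"
    then obtain j where j: "j \<ge> 1" "(2::int)^j dvd int n" "\<not> (2::int)^(Suc j) dvd int n"
      "(2::int)^j dvd int d - 1 \<or> (2::int)^j dvd int d + 1" unfolding Q_def by blast
    have j'1: "(2::int)^j dvd int n'" using j(2) unfolding A[of j] .
    have j'2: "\<not> (2::int)^(Suc j) dvd int n'" using j(3) unfolding A[of "Suc j"] .
    note j' = j'1 j'2
    show "Q (int n') (int d')" unfolding Q_def using j j' B[OF j'(1)] by blast
  next
    assume "Q (int n') (int d')"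
    then obtain j where j: "j \<ge> 1" "(2::int)^j dvd int n'" "\<not> (2::int)^(Suc j) dvd int n'"
      "(2::int)^j dvd int d' - 1 \<or> (2::int)^j dvd int d' + 1" unfolding Q_def by blast
    have j'1: "(2::int)^j dvd int n" unfolding A[of j] by (rule j(2))
    have j'2: "\<not> (2::int)^(Suc j) dvd int n" unfolding A[of "Suc j"] by (rule j(3))
    note j' = j'1 j'2
    show "Q (int n) (int d)" unfolding Q_def using j j' B[OF j(2)] by blast
  qed
  show ?thesis using c1 c2 QQ by simp
qed

end
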